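(* There is a constant $c>1$ such that for all $t\in[0,1]$, on $C_0\setminus\mathrm{Sing}(C_0)$, $$\tfrac1c\,\omega_{FS}|_{C_0}\le(\mathcal{F}_t^*\omega_{FS})|_{C_0}\le c\,\omega_{FS}|_{C_0}.$$ In particular $\omega_{FS}$ restricts to a symplectic form on $C_t\setminus\mathrm{Sing}(C_t)$ for every $t\in[0,1]$.
   Context: On $\mathbb{CP}^2$ with homogeneous coordinates $[z_0,z_1,z_2]$, use affine coordinates $x_k=z_k/z_0=r_ke^{i\theta_k}$ ($k=1,2$); $\omega_{FS}=i\partial\bar\partial\log(1+|x_1|^2+|x_2|^2)$ is the Fubini–Study Kähler form. $C_0$ is the line $\{z_0+z_1+z_2=0\}$ (in affine coordinates $x_1+x_2+1=0$). For $t\in[0,1]$, $\mathcal{F}_t(x_1,x_2)=\Big(\big(\tfrac{\max(1,r_2)}{\max(r_1,r_2)}\big)^tx_1,\big(\tfrac{\max(1,r_1)}{\max(r_1,r_2)}\big)^tx_2\Big)$ (extended continuously to $\mathbb{CP}^2$), $C_t=\mathcal{F}_t(C_0)$, and $\mathrm{Sing}(C_t)=\{x\in C_t:(r_1-1)(r_2-1)(r_1-r_2)=0\}$; $\mathcal{F}_t$ is smooth on $C_0\setminus\mathrm{Sing}(C_0)$. *)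

theory Defs
  imports "HOL-Analysis.Analysis"
begin

text \<open>Affine chart z0 ~= 0 of CP^2, points (x1,x2) :: complex * complex.\<close>

text \<open>Hermitian form of the Fubini--Study metric
  h_{j kbar} = d_j d_kbar log(1+|x|^2) = (delta_{jk}(1+|x|^2) - conj(x_j) x_k)/(1+|x|^2)^2,
  evaluated as sum_{j,k} h_{j kbar} u_j conj(v_k).\<close>
definition fs_herm :: "complex \<times> complex \<Rightarrow> complex \<times> complex \<Rightarrow> complex \<times> complex \<Rightarrow> complex" where
  "fs_herm x u v =
     (let s = 1 + (cmod (fst x))^2 + (cmod (snd x))^2 in
      (of_real s * (fst u * cnj (fst v) + snd u * cnj (snd v))
        - (cnj (fst x) * fst u + cnj (snd x) * snd u) * (fst x * cnj (fst v) + snd x * cnj (snd v)))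
      / of_real (s^2))"

text \<open>omega_FS = i d dbar log(1+|x1|^2+|x2|^2) as a real 2-form:
  (i dz_j \<and> dzbar_k)(u,v) summed gives omega(u,v) = -2 Im h(u,v).\<close>
definition fs_omega :: "complex \<times> complex \<Rightarrow> complex \<times> complex \<Rightarrow> complex \<times> complex \<Rightarrow> real" where
  "fs_omega x u v = -2 * Im (fs_herm x u v)"

text \<open>The line C_0 = {z0+z1+z2=0} in the affine chart.\<close>
definition C0 :: "(complex \<times> complex) set" where
  "C0 = {x. fst x + snd x + 1 = 0}"

definition Sing :: "(complex \<times> complex) set \<Rightarrow> (complex \<times> complex) set" where
  "Sing C = {x \<in> C. (cmod (fst x) - 1) * (cmod (snd x) - 1) * (cmod (fst x) - cmod (snd x)) = 0}"

definition Ft :: "real \<Rightarrow> complex \<times> complex \<Rightarrow> complex \<times> complex" where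
  "Ft t x =
     (let r1 = cmod (fst x); r2 = cmod (snd x) in
      (complex_of_real ((max 1 r2 / max r1 r2) powr t) * fst x,
       complex_of_real ((max 1 r1 / max r1 r2) powr t) * snd x))"

end

theory Submission
  imports Defs
begin

lemma lncmod_deriv:
  fixes z :: complex assumes "z \<noteq> 0"
  shows "((\<lambda>w. ln (cmod w)) has_derivative (\<lambda>h. Re (h / z))) (at z)"
proof -
  have "((\<lambda>w. ln (cmod w)) has_derivative (\<lambda>h. inner h (sgn z) * inverse (cmod z))) (at z)"
    by (rule DERIV_compose_FDERIV[OF DERIV_ln has_derivative_norm]) (use assms in auto)
  moreover have "(\<lambda>h. inner h (sgn z) * inverse (cmod z)) = (\<lambda>h. Re (h / z))"
  proof
    fix h
    have "cmod z ^ 2 = Re z ^ 2 + Im z ^ 2" by (simp add: cmod_power2)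
    then show "inner h (sgn z) * inverse (cmod z) = Re (h / z)"
      using assms by (simp add: inner_complex_def sgn_div_norm Re_divide power2_eq_square field_simps)
  qed
  ultimately show ?thesis by simp
qed

definition lam :: "real \<Rightarrow> real \<Rightarrow> real \<Rightarrow> complex \<times> complex \<Rightarrow> real" where
  "lam t a b x = exp (t * (a * ln (cmod (fst x)) + b * ln (cmod (snd x))))"

definition G :: "real \<Rightarrow> real \<Rightarrow> real \<Rightarrow> real \<Rightarrow> real \<Rightarrow> complex \<times> complex \<Rightarrow> complex \<times> complex" where
  "G t a1 b1 a2 b2 x = (of_real (lam t a1 b1 x) * fst x, of_real (lam t a2 b2 x) * snd x)"

definition dl :: "real \<Rightarrow> real \<Rightarrow> complex \<times> complex \<Rightarrow> complex \<times> complex \<Rightarrow> real" where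
  "dl a b p h = a * Re (fst h / fst p) + b * Re (snd h / snd p)"

definition DG :: "real \<Rightarrow> real \<Rightarrow> real \<Rightarrow> real \<Rightarrow> real \<Rightarrow> complex \<times> complex \<Rightarrow> complex \<times> complex \<Rightarrow> complex \<times> complex" where
  "DG t a1 b1 a2 b2 p h =
    (of_real (lam t a1 b1 p) * (fst h + of_real (t * dl a1 b1 p h) * fst p),
     of_real (lam t a2 b2 p) * (snd h + of_real (t * dl a2 b2 p h) * snd p))"

lemma lam_deriv:
  assumes "fst p \<noteq> 0" "snd p \<noteq> 0"
  shows "(lam t a b has_derivative (\<lambda>h. lam t a b p * (t * dl a b p h))) (at p)"
proof -
  have 1: "((\<lambda>x. ln (cmod (fst x))) has_derivative (\<lambda>h. Re (fst h / fst p))) (at p)"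
    using has_derivative_compose[OF has_derivative_fst[OF has_derivative_ident] lncmod_deriv[OF assms(1)]] by simp
  have 2: "((\<lambda>x. ln (cmod (snd x))) has_derivative (\<lambda>h. Re (snd h / snd p))) (at p)"
    using has_derivative_compose[OF has_derivative_snd[OF has_derivative_ident] lncmod_deriv[OF assms(2)]] by simp
  have 3: "((\<lambda>x. t * (a * ln (cmod (fst x)) + b * ln (cmod (snd x)))) has_derivative (\<lambda>h. t * dl a b p h)) (at p)"
    unfolding dl_def
    by (intro has_derivative_mult_right has_derivative_add 1 2)
  show ?thesis unfolding lam_def
    using has_derivative_exp[OF 3] by (simp add: mult.commute)
qed

lemma G_deriv:
  assumes "fst p \<noteq> 0" "snd p \<noteq> 0"
  shows "(G t a1 b1 a2 b2 has_derivative DG t a1 b1 a2 b2 p) (at p)"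
proof -
  have c: "((\<lambda>x. of_real (lam t a b x) :: complex) has_derivative (\<lambda>h. of_real (lam t a b p * (t * dl a b p h)))) (at p)" for a b
    using has_derivative_compose[OF lam_deriv[OF assms] bounded_linear.has_derivative[OF bounded_linear_of_real has_derivative_ident]]
    by simp
  have d1: "((\<lambda>x. of_real (lam t a1 b1 x) * fst x) has_derivative
     (\<lambda>h. of_real (lam t a1 b1 p) * fst h + of_real (lam t a1 b1 p * (t * dl a1 b1 p h)) * fst p)) (at p)"
    by (rule has_derivative_mult[OF c has_derivative_fst[OF has_derivative_ident], THEN has_derivative_eq_rhs]) auto
  have d2: "((\<lambda>x. of_real (lam t a2 b2 x) * snd x) has_derivative
     (\<lambda>h. of_real (lam t a2 b2 p) * snd h + of_real (lam t a2 b2 p * (t * dl a2 b2 p h)) * snd p)) (at p)"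
    by (rule has_derivative_mult[OF c has_derivative_snd[OF has_derivative_ident], THEN has_derivative_eq_rhs]) auto
  show ?thesis
    unfolding G_def[abs_def]
    by (rule has_derivative_Pair[OF d1 d2, THEN has_derivative_eq_rhs]) (auto simp: DG_def algebra_simps fun_eq_iff)
qed


lemma Nid2:
  fixes t a1 b1 a2 b2 X W R1 R2 L1 L2 :: real
  assumes nz1: "R1 \<noteq> 0" and nz2: "R2 \<noteq> 0"
  defines "X \<equiv> (R2 - R1 - 1) / 2"
  defines "W \<equiv> R1 - X^2"
  defines "k \<equiv> (R1 + R2 - 1) / 2"
  defines "sp \<equiv> 1 + L1 * R1 + L2 * R2"
  defines "E \<equiv> a1 * L1 * (1 + L2 * (R2 - k)) + b2 * L2 * (1 + L1 * (R1 - k))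
             + b1 * (L1 / R2) * (k + L2 * R2 * (k - R1)) + a2 * (L2 / R1) * (k + L1 * R1 * (k - R2))"
  shows "sp * (- (L1 * (1 + t * (a1 + b1 * (k / R2)))) - L2 * (1 + t * (a2 * (k / R1) + b2)))
     + ((L1 * X + L2 * (1+X))^2 + (L1 + L2)^2 * W)
     + t * (W * (L1 * (a1 + b1 * R1 / R2) + L2 * (a2 * R2 / R1 + b2)) * (L1 + L2)
          + (L1 * (a1 * X + b1 * (1+X) * R1 / R2) + L2 * (a2 * X * R2 / R1 + b2 * (1+X))) * (L1 * X + L2 * (1+X)))
    = - (L1 + L2 + L1 * L2 + t * E)"
  using nz1 nz2 unfolding E_def sp_def k_def W_def X_def
  apply (simp add: field_simps)
  apply (simp add: algebra_simps power2_eq_square)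
  done


lemma Nid:
  fixes l1 l2 t a1 b1 a2 b2 X Y R1 R2 L1 L2 :: real
  assumes R1: "R1 = X^2 + Y^2" and R2: "R2 = (1+X)^2 + Y^2" and nz1: "R1 \<noteq> 0" and nz2: "R2 \<noteq> 0"
  and L1: "L1 = l1^2" and L2: "L2 = l2^2"
  defines "m1 \<equiv> a1 * (X / R1) + b1 * ((1+X) / R2)" and "m2 \<equiv> a2 * (X / R1) + b2 * ((1+X) / R2)"
  defines "n1 \<equiv> a1 * (Y / R1) + b1 * (Y / R2)" and "n2 \<equiv> a2 * (Y / R1) + b2 * (Y / R2)"
  defines "k \<equiv> (R1 + R2 - 1) / 2"
  defines "sp \<equiv> 1 + L1 * R1 + L2 * R2"
  defines "E \<equiv> a1 * L1 * (1 + L2 * (R2 - k)) + b2 * L2 * (1 + L1 * (R1 - k))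
             + b1 * (L1 / R2) * (k + L2 * R2 * (k - R1)) + a2 * (L2 / R1) * (k + L1 * R1 * (k - R2))"
  shows "sp * (- (l1^2 * (1 + t * (m1 * X + n1 * Y))) - l2^2 * (1 + t * (m2 * (1+X) + n2 * Y)))
     + ((l1^2 * X + l2^2 * (1+X))^2 + ((l1^2 + l2^2) * Y)^2)
     + t * ((l1^2 * n1 * (X^2+Y^2) + l2^2 * n2 * ((1+X)^2+Y^2)) * ((l1^2 + l2^2) * Y)
          + (l1^2 * m1 * (X^2+Y^2) + l2^2 * m2 * ((1+X)^2+Y^2)) * (l1^2 * X + l2^2 * (1+X)))
    = - (L1 + L2 + L1 * L2 + t * E)"
proof -
  have k1: "X^2 + Y^2 = R1" using R1 by simp
  have k2: "X + X^2 + Y^2 = k" unfolding k_def R1 R2 by (simp add: power2_eq_square algebra_simps)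
  have k3: "(1+X) + X + X^2 + Y^2 = R2" unfolding R2 by (simp add: power2_eq_square algebra_simps)
  have e1: "m1 * X + n1 * Y = a1 + b1 * (k / R2)"
  proof -
    have "m1 * X + n1 * Y = a1 * ((X^2 + Y^2) / R1) + b1 * ((X + X^2 + Y^2) / R2)"
      unfolding m1_def n1_def by (simp add: power2_eq_square add_divide_distrib algebra_simps)
    then show ?thesis unfolding k1 k2 using nz1 by simp
  qed
  have e2: "m2 * (1+X) + n2 * Y = a2 * (k / R1) + b2"
  proof -
    have "m2 * (1+X) + n2 * Y = a2 * ((X + X^2 + Y^2) / R1) + b2 * (((1+X) + X + X^2 + Y^2) / R2)"
      unfolding m2_def n2_def by (simp add: power2_eq_square add_divide_distrib algebra_simps)
    then show ?thesis unfolding k3 k2 using nz2 by simp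
  qed
  have mu: "l1^2 * m1 * (X^2+Y^2) + l2^2 * m2 * ((1+X)^2+Y^2) = L1 * (a1 * X + b1 * (1+X) * R1 / R2) + L2 * (a2 * X * R2 / R1 + b2 * (1+X))"
    using nz1 nz2 unfolding m1_def m2_def L1 L2 R1[symmetric] R2[symmetric] by (simp add: field_simps)
  have nu: "l1^2 * n1 * (X^2+Y^2) + l2^2 * n2 * ((1+X)^2+Y^2) = Y * (L1 * (a1 + b1 * R1 / R2) + L2 * (a2 * R2 / R1 + b2))"
    using nz1 nz2 unfolding n1_def n2_def L1 L2 R1[symmetric] R2[symmetric] by (simp add: field_simps)
  have hX: "X = (R2 - R1 - 1) / 2" using R1 R2 by (simp add: power2_eq_square algebra_simps)
  have hW: "Y^2 = R1 - X^2" using R1 by simp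
  have "sp * (- (L1 * (1 + t * (a1 + b1 * (k / R2)))) - L2 * (1 + t * (a2 * (k / R1) + b2)))
     + ((L1 * X + L2 * (1+X))^2 + (L1 + L2)^2 * (Y^2))
     + t * ((Y^2) * (L1 * (a1 + b1 * R1 / R2) + L2 * (a2 * R2 / R1 + b2)) * (L1 + L2)
          + (L1 * (a1 * X + b1 * (1+X) * R1 / R2) + L2 * (a2 * X * R2 / R1 + b2 * (1+X))) * (L1 * X + L2 * (1+X)))
    = - (L1 + L2 + L1 * L2 + t * E)"
    unfolding hW unfolding hX unfolding E_def sp_def k_def
    by (rule Nid2[OF nz1 nz2, unfolded Let_def])
  then show ?thesis
    unfolding e1 e2 mu nu unfolding L1[symmetric] L2[symmetric]
    by (rule trans[rotated]) (simp add: power2_eq_square algebra_simps)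
qed

lemma ImA:
  fixes l1 l2 t m1 m2 n1 n2 X Y sp :: real
  defines "x1 \<equiv> Complex X Y" and "x2 \<equiv> Complex (-1-X) (-Y)"
  shows "Im (of_real sp * (of_real l1 * (1 + of_real (t * m1) * x1) * cnj (of_real l1 * (\<i> + of_real (t * n1) * x1))
              + of_real l2 * (-1 + of_real (t * m2) * x2) * cnj (of_real l2 * (-\<i> + of_real (t * n2) * x2)))
          - (cnj (of_real l1 * x1) * (of_real l1 * (1 + of_real (t * m1) * x1)) + cnj (of_real l2 * x2) * (of_real l2 * (-1 + of_real (t * m2) * x2)))
           * (of_real l1 * x1 * cnj (of_real l1 * (\<i> + of_real (t * n1) * x1)) + of_real l2 * x2 * cnj (of_real l2 * (-\<i> + of_real (t * n2) * x2))))
   = sp * (- (l1^2 * (1 + t * (m1 * X + n1 * Y))) - l2^2 * (1 + t * (m2 * (1+X) + n2 * Y)))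
     + ((l1^2 * X + l2^2 * (1+X))^2 + ((l1^2 + l2^2) * Y)^2)
     + t * ((l1^2 * n1 * (X^2+Y^2) + l2^2 * n2 * ((1+X)^2+Y^2)) * ((l1^2 + l2^2) * Y)
          + (l1^2 * m1 * (X^2+Y^2) + l2^2 * m2 * ((1+X)^2+Y^2)) * (l1^2 * X + l2^2 * (1+X)))"
  unfolding x1_def x2_def
  by (simp add: algebra_simps power2_eq_square)

lemma omega_id:
  fixes l1 l2 t a1 b1 a2 b2 X Y R1 R2 :: real
  assumes R1: "R1 = X^2 + Y^2" and R2: "R2 = (1+X)^2 + Y^2" and nz1: "R1 \<noteq> 0" and nz2: "R2 \<noteq> 0"
  defines "x1 \<equiv> Complex X Y" and "x2 \<equiv> Complex (-1-X) (-Y)"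
  defines "m1 \<equiv> a1 * Re (1 / x1) + b1 * Re (-1 / x2)" and "m2 \<equiv> a2 * Re (1 / x1) + b2 * Re (-1 / x2)"
  defines "n1 \<equiv> a1 * Re (\<i> / x1) + b1 * Re (-\<i> / x2)" and "n2 \<equiv> a2 * Re (\<i> / x1) + b2 * Re (-\<i> / x2)"
  defines "L1 \<equiv> l1^2" and "L2 \<equiv> l2^2"
  defines "k \<equiv> (R1 + R2 - 1) / 2"
  defines "sp \<equiv> 1 + L1 * R1 + L2 * R2"
  defines "E \<equiv> a1 * L1 * (1 + L2 * (R2 - k)) + b2 * L2 * (1 + L1 * (R1 - k))
             + b1 * (L1 / R2) * (k + L2 * R2 * (k - R1)) + a2 * (L2 / R1) * (k + L1 * R1 * (k - R2))"
  shows "fs_omega (of_real l1 * x1, of_real l2 * x2)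
           (of_real l1 * (1 + of_real (t * m1) * x1), of_real l2 * (-1 + of_real (t * m2) * x2))
           (of_real l1 * (\<i> + of_real (t * n1) * x1), of_real l2 * (-\<i> + of_real (t * n2) * x2))
         = 2 * (L1 + L2 + L1 * L2 + t * E) / sp^2"
proof -
  have c1: "(cmod (of_real l1 * x1))^2 = L1 * R1"
    by (simp add: L1_def R1 x1_def norm_mult power_mult_distrib cmod_power2)
  have c2: "(cmod (of_real l2 * x2))^2 = L2 * R2"
    unfolding L2_def R2 x2_def norm_mult power_mult_distrib cmod_power2 by (simp add: power2_eq_square algebra_simps)
  have sp: "1 + (cmod (of_real l1 * x1))^2 + (cmod (of_real l2 * x2))^2 = sp"
    using c1 c2 sp_def by simp
  have re1: "Re (1 / x1) = X / R1" "Re (\<i> / x1) = Y / R1"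
    by (simp_all add: x1_def R1 Re_divide power2_eq_square)
  have re2: "Re (-1 / x2) = (1+X) / R2" "Re (-\<i> / x2) = Y / R2"
    using nz2 unfolding R2 by (simp_all add: x2_def Re_divide power2_eq_square field_simps)
  have Nid': "sp * (- (l1^2 * (1 + t * (m1 * X + n1 * Y))) - l2^2 * (1 + t * (m2 * (1+X) + n2 * Y)))
     + ((l1^2 * X + l2^2 * (1+X))^2 + ((l1^2 + l2^2) * Y)^2)
     + t * ((l1^2 * n1 * (X^2+Y^2) + l2^2 * n2 * ((1+X)^2+Y^2)) * ((l1^2 + l2^2) * Y)
          + (l1^2 * m1 * (X^2+Y^2) + l2^2 * m2 * ((1+X)^2+Y^2)) * (l1^2 * X + l2^2 * (1+X)))
    = - (L1 + L2 + L1 * L2 + t * E)"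
    unfolding m1_def m2_def n1_def n2_def re1 re2 sp_def E_def k_def
    by (rule Nid[OF R1 R2 nz1 nz2 meta_eq_to_obj_eq[OF L1_def] meta_eq_to_obj_eq[OF L2_def]])
  show ?thesis
    unfolding fs_omega_def fs_herm_def Let_def sp fst_conv snd_conv
    unfolding Im_divide_of_real x1_def x2_def ImA
    unfolding x1_def[symmetric] x2_def[symmetric] Nid'
    by simp
qed


lemma fin_bounds:
  fixes N sp s nlo nhi \<alpha> \<beta> :: real
  assumes "nlo \<le> N" "N \<le> nhi" "sp \<le> \<alpha> * s" "s \<le> \<beta> * sp" "0 < s" "0 < sp"
    "6 * \<alpha>^2 \<le> 200 * nlo" "2 * nhi * \<beta>^2 \<le> 600"
  shows "6 * sp^2 \<le> 200 * N * s^2" "2 * N * s^2 \<le> 600 * sp^2"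
proof -
  have "sp^2 \<le> (\<alpha> * s)^2" using assms by (intro power_mono) auto
  then have "6 * sp^2 \<le> (6 * \<alpha>^2) * s^2" by (simp add: power_mult_distrib)
  also have "\<dots> \<le> (200 * nlo) * s^2" using assms by (intro mult_right_mono) auto
  also have "\<dots> \<le> 200 * N * s^2" using assms by (intro mult_right_mono) auto
  finally show "6 * sp^2 \<le> 200 * N * s^2" .
  have "s^2 \<le> (\<beta> * sp)^2" using assms by (intro power_mono) auto
  have "0 \<le> 6 * \<alpha>^2" by simp
  then have N0: "0 \<le> N" using assms by linarith
  have "2 * N * s^2 \<le> 2 * N * (\<beta> * sp)^2" using \<open>s^2 \<le> _\<close> N0 by (intro mult_left_mono) auto
  also have "\<dots> = (2 * N * \<beta>^2) * sp^2" by (simp add: power_mult_distrib)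
  also have "\<dots> \<le> (2 * nhi * \<beta>^2) * sp^2" using assms by (intro mult_right_mono) auto
  also have "\<dots> \<le> 600 * sp^2" using assms by (intro mult_right_mono) auto
  finally show "2 * N * s^2 \<le> 600 * sp^2" .
qed

lemma region_generic:
  fixes t a1 b1 a2 b2 L1 L2 R1 R2 nlo nhi \<alpha> \<beta> :: real and p :: "complex \<times> complex" and U
  assumes pC: "fst p + snd p + 1 = 0" and nz1: "fst p \<noteq> 0" and nz2: "snd p \<noteq> 0"
    and U: "open U" "p \<in> U" "\<And>x. x \<in> U \<Longrightarrow> G t a1 b1 a2 b2 x = Ft t x"
  assumes R1_def: "R1 = (cmod (fst p))^2" and R2_def: "R2 = (cmod (snd p))^2"
    and L1_def: "L1 = (lam t a1 b1 p)^2" and L2_def: "L2 = (lam t a2 b2 p)^2"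
  defines "k \<equiv> (R1 + R2 - 1) / 2"
  defines "sp \<equiv> 1 + L1 * R1 + L2 * R2"
  defines "s \<equiv> 1 + R1 + R2"
  defines "N \<equiv> L1 + L2 + L1 * L2 + t * (a1 * L1 * (1 + L2 * (R2 - k)) + b2 * L2 * (1 + L1 * (R1 - k))
             + b1 * (L1 / R2) * (k + L2 * R2 * (k - R1)) + a2 * (L2 / R1) * (k + L1 * R1 * (k - R2)))"
  assumes b: "nlo \<le> N" "N \<le> nhi" "sp \<le> \<alpha> * s" "s \<le> \<beta> * sp"
    "6 * \<alpha>^2 \<le> 200 * nlo" "2 * nhi * \<beta>^2 \<le> 600"
  shows "\<exists>D. (Ft t has_derivative D) (at p) \<and>
           (1 / 100) * fs_omega p (1, -1) (\<i>, -\<i>)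
             \<le> fs_omega (Ft t p) (D (1, -1)) (D (\<i>, -\<i>)) \<and>
           fs_omega (Ft t p) (D (1, -1)) (D (\<i>, -\<i>))
             \<le> 100 * fs_omega p (1, -1) (\<i>, -\<i>)"
proof (intro exI conjI)
  show der: "(Ft t has_derivative DG t a1 b1 a2 b2 p) (at p)"
    by (rule has_derivative_transform_within_open[OF G_deriv[OF nz1 nz2] U])
  define X where "X = Re (fst p)"
  define Y where "Y = Im (fst p)"
  have x1: "fst p = Complex X Y" by (simp add: X_def Y_def)
  have x2: "snd p = Complex (-1-X) (-Y)"
    using pC by (simp add: X_def Y_def complex_eq_iff)
  have R1': "R1 = X^2 + Y^2" unfolding R1_def x1 by (simp add: cmod_power2)
  have R2': "R2 = (1+X)^2 + Y^2" unfolding R2_def x2 cmod_power2 by (simp add: power2_eq_square algebra_simps)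
  have R1nz: "R1 \<noteq> 0" using nz1 R1_def by simp
  have R2nz: "R2 \<noteq> 0" using nz2 R2_def by simp
  have p_eq: "p = (Complex X Y, Complex (-1-X) (-Y))" using x1 x2 by (metis prod.collapse)
  have Gp: "Ft t p = G t a1 b1 a2 b2 p" using U by simp
  have om1: "fs_omega (Ft t p) (DG t a1 b1 a2 b2 p (1, -1)) (DG t a1 b1 a2 b2 p (\<i>, -\<i>)) = 2 * N / sp^2"
    unfolding Gp G_def DG_def dl_def fst_conv snd_conv
    unfolding x1 x2
    using omega_id[OF R1' R2' R1nz R2nz, of "lam t a1 b1 p" "lam t a2 b2 p" t a1 b1 a2 b2]
    unfolding N_def sp_def k_def L1_def L2_def
    by (simp add: mult.assoc)
  have om0: "fs_omega p (1, -1) (\<i>, -\<i>) = 6 / s^2"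
    using omega_id[OF R1' R2' R1nz R2nz, of 1 1 0 0 0 0 0]
    unfolding s_def
    by (simp add: p_eq)
  have spos: "s > 0" unfolding s_def R1_def R2_def by (simp add: add_pos_nonneg)
  have sppos: "sp > 0" unfolding sp_def L1_def L2_def R1_def R2_def by (simp add: add_pos_nonneg)
  note fb = fin_bounds[OF b(1-4) spos sppos b(5,6)]
  show "(1 / 100) * fs_omega p (1, -1) (\<i>, -\<i>)
             \<le> fs_omega (Ft t p) (DG t a1 b1 a2 b2 p (1, -1)) (DG t a1 b1 a2 b2 p (\<i>, -\<i>))"
    unfolding om0 om1 using fb(1) spos sppos by (simp add: divide_simps)
  show "fs_omega (Ft t p) (DG t a1 b1 a2 b2 p (1, -1)) (DG t a1 b1 a2 b2 p (\<i>, -\<i>))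
             \<le> 100 * fs_omega p (1, -1) (\<i>, -\<i>)"
    unfolding om0 om1 using fb(2) spos sppos by (simp add: divide_simps)
qed


lemma geo:
  assumes pC: "fst p + snd p + 1 = 0"
  shows "cmod (fst p) \<le> 1 + cmod (snd p)" "cmod (snd p) \<le> 1 + cmod (fst p)" "1 \<le> cmod (fst p) + cmod (snd p)"
proof -
  have e1: "fst p = - (1 + snd p)" and e2: "snd p = - (1 + fst p)" and e3: "1 = - (fst p + snd p)"
    using pC by (simp_all add: algebra_simps eq_neg_iff_add_eq_0)
  show "cmod (fst p) \<le> 1 + cmod (snd p)"
    by (subst e1) (metis norm_minus_cancel norm_one norm_triangle_ineq)
  show "cmod (snd p) \<le> 1 + cmod (fst p)"
    by (subst e2) (metis norm_minus_cancel norm_one norm_triangle_ineq)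
  show "1 \<le> cmod (fst p) + cmod (snd p)"
    by (metis e3 norm_minus_cancel norm_one norm_triangle_ineq)
qed

lemma exp_bnd:
  fixes c t :: real assumes "c \<le> 0" "0 \<le> t" "t \<le> 1"
  shows "exp c \<le> exp (t * c)" "exp (t * c) \<le> 1"
proof -
  have "c \<le> t * c" using assms by (metis mult_left_mono_neg mult.commute mult.right_neutral)
  then show "exp c \<le> exp (t * c)" by simp
  have "t * c \<le> 0" using assms by (simp add: mult_nonneg_nonpos)
  then show "exp (t * c) \<le> 1" by simp
qed

lemma open_U: 
  fixes f g h j :: "complex \<times> complex \<Rightarrow> real"
  assumes "continuous_on UNIV f" "continuous_on UNIV g" "continuous_on UNIV h" "continuous_on UNIV j"
  shows "open {x. f x < g x \<and> h x < j x}"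
  by (intro open_Collect_conj open_Collect_less assms)

lemma tbound:
  fixes t g c :: real
  assumes "0 \<le> t" "t \<le> 1" "- c \<le> g" "g \<le> c"
  shows "- c \<le> t * g" "t * g \<le> c"
proof -
  have c0: "0 \<le> c" using assms by linarith
  have a: "t * g \<le> t * c" using assms by (intro mult_left_mono) auto
  have b: "t * c \<le> c" using assms c0 by (intro mult_left_le_one_le) auto
  have "t * (- c) \<le> t * g" using assms by (intro mult_left_mono) auto
  then show "- c \<le> t * g" using b by simp
  show "t * g \<le> c" using a b by linarith
qed

lemma exp_bnd2:
  fixes c t :: real assumes "0 \<le> c" "0 \<le> t" "t \<le> 1"
  shows "1 \<le> exp (t * c)" "exp (t * c) \<le> exp c"
proof -
  have "t * c \<le> c" using assms by (intro mult_left_le_one_le) auto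
  then show "exp (t * c) \<le> exp c" by simp
  have "0 \<le> t * c" using assms by simp
  then show "1 \<le> exp (t * c)" by simp
qed

lemma reg1:
  fixes t :: real and p :: "complex \<times> complex"
  assumes t: "0 \<le> t" "t \<le> 1" and pC: "fst p + snd p + 1 = 0"
    and o1: "cmod (snd p) < cmod (fst p)" and o2: "1 < cmod (snd p)"
  shows "\<exists>D. (Ft t has_derivative D) (at p) \<and>
           (1 / 100) * fs_omega p (1, -1) (\<i>, -\<i>)
             \<le> fs_omega (Ft t p) (D (1, -1)) (D (\<i>, -\<i>)) \<and>
           fs_omega (Ft t p) (D (1, -1)) (D (\<i>, -\<i>))
             \<le> 100 * fs_omega p (1, -1) (\<i>, -\<i>)"
proof -
  define r1 where "r1 = cmod (fst p)"
  define r2 where "r2 = cmod (snd p)"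
  note g = geo[OF pC, folded r1_def r2_def]
  have o1': "r2 < r1" and o2': "1 < r2" using o1 o2 by (simp_all add: r1_def r2_def)
  have nz1: "fst p \<noteq> 0" and nz2: "snd p \<noteq> 0" using o1' o2' r1_def r2_def by auto
  define U where "U = {x::complex\<times>complex. cmod (snd x) < cmod (fst x) \<and> 1 < cmod (snd x)}"
  have Uo: "open U" unfolding U_def by (intro open_U continuous_intros)
  have pU: "p \<in> U" unfolding U_def using o1 o2 by simp
  have FG: "G t (-1) 1 0 0 x = Ft t x" if "x \<in> U" for x
  proof -
    have a: "cmod (snd x) < cmod (fst x)" "1 < cmod (snd x)" using that unfolding U_def by auto
    then have "fst x \<noteq> 0" "snd x \<noteq> 0" by auto
    have "max 1 (cmod (snd x)) = cmod (snd x)" "max (cmod (fst x)) (cmod (snd x)) = cmod (fst x)"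
      "max 1 (cmod (fst x)) = cmod (fst x)" using a by auto
    moreover have "(cmod (snd x) / cmod (fst x)) powr t = exp (t * (- 1 * ln (cmod (fst x)) + 1 * ln (cmod (snd x))))"
      using a \<open>fst x \<noteq> 0\<close> \<open>snd x \<noteq> 0\<close> by (simp add: powr_def ln_div algebra_simps)
    ultimately show ?thesis using a \<open>fst x \<noteq> 0\<close> \<open>snd x \<noteq> 0\<close> unfolding G_def Ft_def lam_def Let_def by simp
  qed
  define l1 where "l1 = lam t (-1) 1 p"
  have l2: "lam t 0 0 p = 1" by (simp add: lam_def)
  have l1e: "l1 = exp (t * (ln r2 - ln r1))" unfolding l1_def lam_def r1_def r2_def by (simp add: algebra_simps)
  have cle: "ln r2 - ln r1 \<le> 0" using o1' o2' by simp
  have "exp (ln r2 - ln r1) = r2 / r1" using o1' o2' by (simp add: exp_diff)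
  then have l1lo: "r2 / r1 \<le> l1" and l1hi: "l1 \<le> 1" using exp_bnd[OF cle t] l1e by auto
  have l1pos: "0 < l1" using l1e by simp
  define L1 where "L1 = l1^2"
  define R1 where "R1 = r1^2"
  define R2 where "R2 = r2^2"
  have L1hi: "L1 \<le> 1" unfolding L1_def using l1hi l1pos by (simp add: power_le_one)
  have L1pos: "0 \<le> L1" unfolding L1_def by simp
  have "r2 \<le> l1 * r1" using l1lo o1' o2' by (simp add: divide_le_eq mult.commute)
  then have "r2^2 \<le> (l1 * r1)^2" using o2' by (intro power_mono) auto
  then have L1R1: "R2 \<le> L1 * R1" unfolding L1_def R1_def R2_def by (simp add: power_mult_distrib)
  have R2g: "1 < R2" unfolding R2_def using o2' by (simp add: one_less_power)
  have R1g: "R2 < R1" unfolding R1_def R2_def using o1' o2' by (simp add: power_strict_mono)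
  have "r1 \<le> 2 * r2" using g o2' by linarith
  then have "r1^2 \<le> (2 * r2)^2" using o1' o2' by (intro power_mono) auto
  then have R14: "R1 \<le> 4 * R2" unfolding R1_def R2_def by (simp add: power_mult_distrib)
  define k where "k = (R1 + R2 - 1) / 2"
  have kpos: "0 < k" unfolding k_def using R1g R2g by simp
  have kR2: "k / R2 \<le> 5 / 2" unfolding k_def using R14 R2g by (simp add: divide_simps)
  have kR2pos: "0 \<le> k / R2" using kpos R2g by simp
  have Neq: "L1 + 1 + L1 * 1 + t * (- 1 * L1 * (1 + 1 * (R2 - k)) + 0 * 1 * (1 + L1 * (R1 - k))
             + 1 * (L1 / R2) * (k + 1 * R2 * (k - R1)) + 0 * (1 / R1) * (k + L1 * R1 * (k - R2)))
          = 1 + L1 * (2 - 2 * t + t * (k / R2))"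
    using R2g unfolding k_def by (simp add: field_simps)
  have "0 \<le> t * (k / R2)" using t(1) kR2pos by (rule mult_nonneg_nonneg)
  then have fac: "0 \<le> 2 - 2 * t + t * (k / R2)" using t by linarith
  have "t * (k / R2) \<le> k / R2" using t by (intro mult_left_le_one_le[OF kR2pos]) auto
  then have fac2: "2 - 2 * t + t * (k / R2) \<le> 5" using t kR2 by linarith
  have N1: "1 \<le> 1 + L1 * (2 - 2 * t + t * (k / R2))" using L1pos fac by simp
  have "L1 * (2 - 2 * t + t * (k / R2)) \<le> (2 - 2 * t + t * (k / R2))"
    by (rule mult_left_le_one_le[OF fac L1pos L1hi])
  then have N2: "1 + L1 * (2 - 2 * t + t * (k / R2)) \<le> 6" using fac2 by linarith
  have "L1 * R1 \<le> R1" using R1g R2g by (intro mult_left_le_one_le[OF _ L1pos L1hi]) auto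
  then have sp1: "1 + L1 * R1 + 1 * R2 \<le> 1 * (1 + R1 + R2)" by simp
  have sp2: "1 + R1 + R2 \<le> 3 * (1 + L1 * R1 + 1 * R2)" using L1R1 R14 R2g by (simp add: algebra_simps)
  have eR1: "R1 = (cmod (fst p))^2" and eR2: "R2 = (cmod (snd p))^2" by (simp_all add: R1_def R2_def r1_def r2_def)
  have eL1: "L1 = (lam t (-1) 1 p)^2" and eL2: "1 = (lam t 0 0 p)^2" by (simp_all add: L1_def l1_def l2)
  show ?thesis
    apply (rule region_generic[OF pC nz1 nz2 Uo pU FG eR1 eR2 eL1 eL2, where nlo=1 and nhi=6 and \<alpha>=1 and \<beta>=3])
    using N1[unfolded k_def] N2[unfolded k_def] sp1 sp2 Neq[unfolded k_def]
    by simp_all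
qed

lemma reg2:
  fixes t :: real and p :: "complex \<times> complex"
  assumes t: "0 \<le> t" "t \<le> 1" and pC: "fst p + snd p + 1 = 0"
    and o1: "cmod (fst p) < cmod (snd p)" and o2: "1 < cmod (fst p)"
  shows "\<exists>D. (Ft t has_derivative D) (at p) \<and>
           (1 / 100) * fs_omega p (1, -1) (\<i>, -\<i>)
             \<le> fs_omega (Ft t p) (D (1, -1)) (D (\<i>, -\<i>)) \<and>
           fs_omega (Ft t p) (D (1, -1)) (D (\<i>, -\<i>))
             \<le> 100 * fs_omega p (1, -1) (\<i>, -\<i>)"
proof -
  define r1 where "r1 = cmod (fst p)"
  define r2 where "r2 = cmod (snd p)"
  note g = geo[OF pC, folded r1_def r2_def]
  have o1': "r1 < r2" and o2': "1 < r1" using o1 o2 by (simp_all add: r1_def r2_def)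
  have nz1: "fst p \<noteq> 0" and nz2: "snd p \<noteq> 0" using o1' o2' r1_def r2_def by auto
  define U where "U = {x::complex\<times>complex. cmod (fst x) < cmod (snd x) \<and> 1 < cmod (fst x)}"
  have Uo: "open U" unfolding U_def by (intro open_U continuous_intros)
  have pU: "p \<in> U" unfolding U_def using o1 o2 by simp
  have FG: "G t 0 0 1 (-1) x = Ft t x" if "x \<in> U" for x
  proof -
    have a: "cmod (fst x) < cmod (snd x)" "1 < cmod (fst x)" using that unfolding U_def by auto
    then have "fst x \<noteq> 0" "snd x \<noteq> 0" by auto
    have "max 1 (cmod (snd x)) = cmod (snd x)" "max (cmod (fst x)) (cmod (snd x)) = cmod (snd x)"
      "max 1 (cmod (fst x)) = cmod (fst x)" using a by auto
    moreover have "(cmod (fst x) / cmod (snd x)) powr t = exp (t * (1 * ln (cmod (fst x)) + - 1 * ln (cmod (snd x))))"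
      using a \<open>fst x \<noteq> 0\<close> \<open>snd x \<noteq> 0\<close> by (simp add: powr_def ln_div algebra_simps)
    ultimately show ?thesis using a \<open>fst x \<noteq> 0\<close> \<open>snd x \<noteq> 0\<close> unfolding G_def Ft_def lam_def Let_def by simp
  qed
  define l2 where "l2 = lam t 1 (-1) p"
  have l1: "lam t 0 0 p = 1" by (simp add: lam_def)
  have l2e: "l2 = exp (t * (ln r1 - ln r2))" unfolding l2_def lam_def r1_def r2_def by (simp add: algebra_simps)
  have cle: "ln r1 - ln r2 \<le> 0" using o1' o2' by simp
  have "exp (ln r1 - ln r2) = r1 / r2" using o1' o2' by (simp add: exp_diff)
  then have l2lo: "r1 / r2 \<le> l2" and l2hi: "l2 \<le> 1" using exp_bnd[OF cle t] l2e by auto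
  have l2pos: "0 < l2" using l2e by simp
  define L2 where "L2 = l2^2"
  define R1 where "R1 = r1^2"
  define R2 where "R2 = r2^2"
  have L2hi: "L2 \<le> 1" unfolding L2_def using l2hi l2pos by (simp add: power_le_one)
  have L2pos: "0 \<le> L2" unfolding L2_def by simp
  have "r1 \<le> l2 * r2" using l2lo o1' o2' by (simp add: divide_le_eq mult.commute)
  then have "r1^2 \<le> (l2 * r2)^2" using o2' by (intro power_mono) auto
  then have L2R2: "R1 \<le> L2 * R2" unfolding L2_def R1_def R2_def by (simp add: power_mult_distrib)
  have R1g: "1 < R1" unfolding R1_def using o2' by (simp add: one_less_power)
  have R2g: "R1 < R2" unfolding R1_def R2_def using o1' o2' by (simp add: power_strict_mono)
  have "r2 \<le> 2 * r1" using g o2' by linarith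
  then have "r2^2 \<le> (2 * r1)^2" using o1' o2' by (intro power_mono) auto
  then have R24: "R2 \<le> 4 * R1" unfolding R1_def R2_def by (simp add: power_mult_distrib)
  define k where "k = (R1 + R2 - 1) / 2"
  have kpos: "0 < k" unfolding k_def using R1g R2g by simp
  have kR1: "k / R1 \<le> 5 / 2" unfolding k_def using R24 R1g by (simp add: divide_simps)
  have kR1pos: "0 \<le> k / R1" using kpos R1g by simp
  have Neq: "1 + L2 + 1 * L2 + t * (0 * 1 * (1 + L2 * (R2 - k)) + - 1 * L2 * (1 + 1 * (R1 - k))
             + 0 * (1 / R2) * (k + L2 * R2 * (k - R1)) + 1 * (L2 / R1) * (k + 1 * R1 * (k - R2)))
          = 1 + L2 * (2 - 2 * t + t * (k / R1))"
    using R1g unfolding k_def by (simp add: field_simps)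
  have "0 \<le> t * (k / R1)" using t(1) kR1pos by (rule mult_nonneg_nonneg)
  then have fac: "0 \<le> 2 - 2 * t + t * (k / R1)" using t by linarith
  have "t * (k / R1) \<le> k / R1" using t by (intro mult_left_le_one_le[OF kR1pos]) auto
  then have fac2: "2 - 2 * t + t * (k / R1) \<le> 5" using t kR1 by linarith
  have N1: "1 \<le> 1 + L2 * (2 - 2 * t + t * (k / R1))" using L2pos fac by simp
  have "L2 * (2 - 2 * t + t * (k / R1)) \<le> (2 - 2 * t + t * (k / R1))"
    by (rule mult_left_le_one_le[OF fac L2pos L2hi])
  then have N2: "1 + L2 * (2 - 2 * t + t * (k / R1)) \<le> 6" using fac2 by linarith
  have "L2 * R2 \<le> R2" using R1g R2g by (intro mult_left_le_one_le[OF _ L2pos L2hi]) auto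
  then have sp1: "1 + 1 * R1 + L2 * R2 \<le> 1 * (1 + R1 + R2)" by simp
  have sp2: "1 + R1 + R2 \<le> 3 * (1 + 1 * R1 + L2 * R2)" using L2R2 R24 R1g by (simp add: algebra_simps)
  have eR1: "R1 = (cmod (fst p))^2" and eR2: "R2 = (cmod (snd p))^2" by (simp_all add: R1_def R2_def r1_def r2_def)
  have eL1: "1 = (lam t 0 0 p)^2" and eL2: "L2 = (lam t 1 (-1) p)^2" by (simp_all add: L2_def l2_def l1)
  show ?thesis
    apply (rule region_generic[OF pC nz1 nz2 Uo pU FG eR1 eR2 eL1 eL2, where nlo=1 and nhi=6 and \<alpha>=1 and \<beta>=3])
    using N1[unfolded k_def] N2[unfolded k_def] sp1 sp2 Neq[unfolded k_def]
    by simp_all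
qed

lemma reg3:
  fixes t :: real and p :: "complex \<times> complex"
  assumes t: "0 \<le> t" "t \<le> 1" and pC: "fst p + snd p + 1 = 0"
    and o1: "1 < cmod (fst p)" and o2: "cmod (snd p) < 1"
  shows "\<exists>D. (Ft t has_derivative D) (at p) \<and>
           (1 / 100) * fs_omega p (1, -1) (\<i>, -\<i>)
             \<le> fs_omega (Ft t p) (D (1, -1)) (D (\<i>, -\<i>)) \<and>
           fs_omega (Ft t p) (D (1, -1)) (D (\<i>, -\<i>))
             \<le> 100 * fs_omega p (1, -1) (\<i>, -\<i>)"
proof -
  define r1 where "r1 = cmod (fst p)"
  define r2 where "r2 = cmod (snd p)"
  note g = geo[OF pC, folded r1_def r2_def]
  have o1': "1 < r1" and o2': "r2 < 1" using o1 o2 by (simp_all add: r1_def r2_def)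
  have r2pos: "0 < r2" using g o1' by linarith
  have nz1: "fst p \<noteq> 0" and nz2: "snd p \<noteq> 0" using o1' r2pos r1_def r2_def by auto
  define U where "U = {x::complex\<times>complex. 1 < cmod (fst x) \<and> cmod (snd x) < 1}"
  have Uo: "open U" unfolding U_def by (intro open_U continuous_intros)
  have pU: "p \<in> U" unfolding U_def using o1 o2 by simp
  have FG: "G t (-1) 0 0 0 x = Ft t x" if "x \<in> U" for x
  proof -
    have a: "1 < cmod (fst x)" "cmod (snd x) < 1" using that unfolding U_def by auto
    then have "fst x \<noteq> 0" by auto
    have "max 1 (cmod (snd x)) = 1" "max (cmod (fst x)) (cmod (snd x)) = cmod (fst x)"
      "max 1 (cmod (fst x)) = cmod (fst x)" using a by auto
    moreover have "(1 / cmod (fst x)) powr t = exp (t * (- 1 * ln (cmod (fst x)) + 0 * ln (cmod (snd x))))"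
      using a \<open>fst x \<noteq> 0\<close> by (simp add: powr_def ln_div algebra_simps)
    ultimately show ?thesis using a \<open>fst x \<noteq> 0\<close> unfolding G_def Ft_def lam_def Let_def by simp
  qed
  define l1 where "l1 = lam t (-1) 0 p"
  have l2: "lam t 0 0 p = 1" by (simp add: lam_def)
  have l1e: "l1 = exp (t * (- ln r1))" unfolding l1_def lam_def r1_def r2_def by (simp add: algebra_simps)
  have cle: "- ln r1 \<le> 0" using o1' by simp
  have "exp (- ln r1) = 1 / r1" using o1' by (simp add: exp_minus inverse_eq_divide)
  then have l1lo: "1 / r1 \<le> l1" and l1hi: "l1 \<le> 1" using exp_bnd[OF cle t] l1e by auto
  have l1pos: "0 < l1" using l1e by simp
  define L1 where "L1 = l1^2"
  define R1 where "R1 = r1^2"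
  define R2 where "R2 = r2^2"
  have L1hi: "L1 \<le> 1" unfolding L1_def using l1hi l1pos by (simp add: power_le_one)
  have L1pos: "0 \<le> L1" unfolding L1_def by simp
  have "1 \<le> l1 * r1" using l1lo o1' by (simp add: divide_le_eq mult.commute)
  then have "1^2 \<le> (l1 * r1)^2" by (intro power_mono) auto
  then have L1R1: "1 \<le> L1 * R1" unfolding L1_def R1_def by (simp add: power_mult_distrib)
  have R1g: "1 < R1" unfolding R1_def using o1' by (simp add: one_less_power)
  have R2l: "R2 < 1" and R2pos: "0 \<le> R2" unfolding R2_def using o2' r2pos by (simp_all add: abs_square_less_1)
  have "r1 \<le> 2" using g o2' by linarith
  then have "r1^2 \<le> 2^2" using o1' by (intro power_mono) auto
  then have R14: "R1 \<le> 4" unfolding R1_def by simp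
  define k where "k = (R1 + R2 - 1) / 2"
  define gg where "gg = (3 + R2 - R1) / 2"
  have gg1: "gg \<le> 3/2" and gg2: "- (3/2) \<le> gg" unfolding gg_def using R1g R2l R14 R2pos by simp_all
  note tb = tbound[OF t gg2 gg1]
  have Neq: "L1 + 1 + L1 * 1 + t * (- 1 * L1 * (1 + 1 * (R2 - k)) + 0 * 1 * (1 + L1 * (R1 - k))
             + 0 * (L1 / R2) * (k + 1 * R2 * (k - R1)) + 0 * (1 / R1) * (k + L1 * R1 * (k - R2)))
          = 1 + L1 * (2 - t * gg)"
    unfolding k_def gg_def by (simp add: field_simps)
  have fac: "0 \<le> 2 - t * gg" using tb by linarith
  have fac2: "2 - t * gg \<le> 4" using tb by linarith
  have N1: "1 \<le> 1 + L1 * (2 - t * gg)" using L1pos fac by simp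
  have "L1 * (2 - t * gg) \<le> (2 - t * gg)"
    by (rule mult_left_le_one_le[OF fac L1pos L1hi])
  then have N2: "1 + L1 * (2 - t * gg) \<le> 5" using fac2 by linarith
  have "L1 * R1 \<le> R1" using R1g by (intro mult_left_le_one_le[OF _ L1pos L1hi]) auto
  then have sp1: "1 + L1 * R1 + 1 * R2 \<le> 1 * (1 + R1 + R2)" by simp
  have sp2: "1 + R1 + R2 \<le> 6 * (1 + L1 * R1 + 1 * R2)" using L1R1 R14 R2l R2pos by (simp add: algebra_simps)
  have eR1: "R1 = (cmod (fst p))^2" and eR2: "R2 = (cmod (snd p))^2" by (simp_all add: R1_def R2_def r1_def r2_def)
  have eL1: "L1 = (lam t (-1) 0 p)^2" and eL2: "1 = (lam t 0 0 p)^2" by (simp_all add: L1_def l1_def l2)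
  show ?thesis
    apply (rule region_generic[OF pC nz1 nz2 Uo pU FG eR1 eR2 eL1 eL2, where nlo=1 and nhi=5 and \<alpha>=1 and \<beta>=6])
    using N1[unfolded gg_def k_def] N2[unfolded gg_def k_def] sp1 sp2 Neq[unfolded k_def gg_def]
    by simp_all
qed

lemma reg4:
  fixes t :: real and p :: "complex \<times> complex"
  assumes t: "0 \<le> t" "t \<le> 1" and pC: "fst p + snd p + 1 = 0"
    and o1: "1 < cmod (snd p)" and o2: "cmod (fst p) < 1"
  shows "\<exists>D. (Ft t has_derivative D) (at p) \<and>
           (1 / 100) * fs_omega p (1, -1) (\<i>, -\<i>)
             \<le> fs_omega (Ft t p) (D (1, -1)) (D (\<i>, -\<i>)) \<and>
           fs_omega (Ft t p) (D (1, -1)) (D (\<i>, -\<i>))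
             \<le> 100 * fs_omega p (1, -1) (\<i>, -\<i>)"
proof -
  define r1 where "r1 = cmod (fst p)"
  define r2 where "r2 = cmod (snd p)"
  note g = geo[OF pC, folded r1_def r2_def]
  have o1': "1 < r2" and o2': "r1 < 1" using o1 o2 by (simp_all add: r1_def r2_def)
  have r1pos: "0 < r1" using g o1' by linarith
  have nz1: "fst p \<noteq> 0" and nz2: "snd p \<noteq> 0" using o1' r1pos r1_def r2_def by auto
  define U where "U = {x::complex\<times>complex. 1 < cmod (snd x) \<and> cmod (fst x) < 1}"
  have Uo: "open U" unfolding U_def by (intro open_U continuous_intros)
  have pU: "p \<in> U" unfolding U_def using o1 o2 by simp
  have FG: "G t 0 0 0 (-1) x = Ft t x" if "x \<in> U" for x
  proof -
    have a: "1 < cmod (snd x)" "cmod (fst x) < 1" using that unfolding U_def by auto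
    then have "snd x \<noteq> 0" by auto
    have "max 1 (cmod (snd x)) = cmod (snd x)" "max (cmod (fst x)) (cmod (snd x)) = cmod (snd x)"
      "max 1 (cmod (fst x)) = 1" using a by auto
    moreover have "(1 / cmod (snd x)) powr t = exp (t * (0 * ln (cmod (fst x)) + - 1 * ln (cmod (snd x))))"
      using a \<open>snd x \<noteq> 0\<close> by (simp add: powr_def ln_div algebra_simps)
    ultimately show ?thesis using a \<open>snd x \<noteq> 0\<close> unfolding G_def Ft_def lam_def Let_def by simp
  qed
  define l2 where "l2 = lam t 0 (-1) p"
  have l1: "lam t 0 0 p = 1" by (simp add: lam_def)
  have l2e: "l2 = exp (t * (- ln r2))" unfolding l2_def lam_def r1_def r2_def by (simp add: algebra_simps)
  have cle: "- ln r2 \<le> 0" using o1' by simp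
  have "exp (- ln r2) = 1 / r2" using o1' by (simp add: exp_minus inverse_eq_divide)
  then have l2lo: "1 / r2 \<le> l2" and l2hi: "l2 \<le> 1" using exp_bnd[OF cle t] l2e by auto
  have l2pos: "0 < l2" using l2e by simp
  define L2 where "L2 = l2^2"
  define R1 where "R1 = r1^2"
  define R2 where "R2 = r2^2"
  have L2hi: "L2 \<le> 1" unfolding L2_def using l2hi l2pos by (simp add: power_le_one)
  have L2pos: "0 \<le> L2" unfolding L2_def by simp
  have "1 \<le> l2 * r2" using l2lo o1' by (simp add: divide_le_eq mult.commute)
  then have "1^2 \<le> (l2 * r2)^2" by (intro power_mono) auto
  then have L2R2: "1 \<le> L2 * R2" unfolding L2_def R2_def by (simp add: power_mult_distrib)
  have R2g: "1 < R2" unfolding R2_def using o1' by (simp add: one_less_power)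
  have R1l: "R1 < 1" and R1pos: "0 \<le> R1" unfolding R1_def using o2' r1pos by (simp_all add: abs_square_less_1)
  have "r2 \<le> 2" using g o2' by linarith
  then have "r2^2 \<le> 2^2" using o1' by (intro power_mono) auto
  then have R24: "R2 \<le> 4" unfolding R2_def by simp
  define k where "k = (R1 + R2 - 1) / 2"
  define gg where "gg = (3 + R1 - R2) / 2"
  have gg1: "gg \<le> 3/2" and gg2: "- (3/2) \<le> gg" unfolding gg_def using R2g R1l R24 R1pos by simp_all
  note tb = tbound[OF t gg2 gg1]
  have Neq: "1 + L2 + 1 * L2 + t * (0 * 1 * (1 + L2 * (R2 - k)) + - 1 * L2 * (1 + 1 * (R1 - k))
             + 0 * (1 / R2) * (k + L2 * R2 * (k - R1)) + 0 * (L2 / R1) * (k + 1 * R1 * (k - R2)))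
          = 1 + L2 * (2 - t * gg)"
    unfolding k_def gg_def by (simp add: field_simps)
  have fac: "0 \<le> 2 - t * gg" using tb by linarith
  have fac2: "2 - t * gg \<le> 4" using tb by linarith
  have N1: "1 \<le> 1 + L2 * (2 - t * gg)" using L2pos fac by simp
  have "L2 * (2 - t * gg) \<le> (2 - t * gg)"
    by (rule mult_left_le_one_le[OF fac L2pos L2hi])
  then have N2: "1 + L2 * (2 - t * gg) \<le> 5" using fac2 by linarith
  have "L2 * R2 \<le> R2" using R2g by (intro mult_left_le_one_le[OF _ L2pos L2hi]) auto
  then have sp1: "1 + 1 * R1 + L2 * R2 \<le> 1 * (1 + R1 + R2)" by simp
  have sp2: "1 + R1 + R2 \<le> 6 * (1 + 1 * R1 + L2 * R2)" using L2R2 R24 R1l R1pos by (simp add: algebra_simps)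
  have eR1: "R1 = (cmod (fst p))^2" and eR2: "R2 = (cmod (snd p))^2" by (simp_all add: R1_def R2_def r1_def r2_def)
  have eL1: "1 = (lam t 0 0 p)^2" and eL2: "L2 = (lam t 0 (-1) p)^2" by (simp_all add: L2_def l2_def l1)
  show ?thesis
    apply (rule region_generic[OF pC nz1 nz2 Uo pU FG eR1 eR2 eL1 eL2, where nlo=1 and nhi=5 and \<alpha>=1 and \<beta>=6])
    using N1[unfolded gg_def k_def] N2[unfolded gg_def k_def] sp1 sp2 Neq[unfolded k_def gg_def]
    by simp_all
qed

lemma reg5:
  fixes t :: real and p :: "complex \<times> complex"
  assumes t: "0 \<le> t" "t \<le> 1" and pC: "fst p + snd p + 1 = 0"
    and o1: "cmod (snd p) < cmod (fst p)" and o2: "cmod (fst p) < 1"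
  shows "\<exists>D. (Ft t has_derivative D) (at p) \<and>
           (1 / 100) * fs_omega p (1, -1) (\<i>, -\<i>)
             \<le> fs_omega (Ft t p) (D (1, -1)) (D (\<i>, -\<i>)) \<and>
           fs_omega (Ft t p) (D (1, -1)) (D (\<i>, -\<i>))
             \<le> 100 * fs_omega p (1, -1) (\<i>, -\<i>)"
proof -
  define r1 where "r1 = cmod (fst p)"
  define r2 where "r2 = cmod (snd p)"
  note g = geo[OF pC, folded r1_def r2_def]
  have o1': "r2 < r1" and o2': "r1 < 1" using o1 o2 by (simp_all add: r1_def r2_def)
  have rBpos: "0 < r2" using g o2' by linarith
  have nz1: "fst p \<noteq> 0" and nz2: "snd p \<noteq> 0" using o1' rBpos r1_def r2_def by auto
  define U where "U = {x::complex\<times>complex. cmod (snd x) < cmod (fst x) \<and> cmod (fst x) < 1}"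
  have Uo: "open U" unfolding U_def by (intro open_U continuous_intros)
  have pU: "p \<in> U" unfolding U_def using o1 o2 by simp
  have FG: "G t (-1) 0 (-1) 0 x = Ft t x" if "x \<in> U" for x
  proof -
    have a: "cmod (snd x) < cmod (fst x)" "cmod (fst x) < 1" using that unfolding U_def by auto
    then have "fst x \<noteq> 0" by auto
    have "max 1 (cmod (snd x)) = 1" "max (cmod (fst x)) (cmod (snd x)) = cmod (fst x)" "max 1 (cmod (fst x)) = 1" using a by auto
    moreover have "(1 / cmod (fst x)) powr t = exp (t * (- 1 * ln (cmod (fst x)) + 0 * ln (cmod (snd x))))"
      using a \<open>fst x \<noteq> 0\<close> by (simp add: powr_def ln_div algebra_simps)
    ultimately show ?thesis using a \<open>fst x \<noteq> 0\<close> unfolding G_def Ft_def lam_def Let_def by simp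
  qed
  define l where "l = lam t (-1) 0 p"
  have le: "l = exp (t * (- ln r1))" unfolding l_def lam_def r1_def r2_def by (simp add: algebra_simps)
  have cge: "0 \<le> - ln r1" using o2' rBpos o1' by simp
  have "exp (- ln r1) = 1 / r1" using o1' rBpos by (simp add: exp_minus inverse_eq_divide)
  then have llo: "1 \<le> l" and lhi: "l \<le> 1 / r1" using exp_bnd2[OF cge t] le by auto
  define L where "L = l^2"
  define R1 where "R1 = r1^2"
  define R2 where "R2 = r2^2"
  have Lge: "1 \<le> L" unfolding L_def using llo by (simp add: one_le_power)
  have Lpos: "0 \<le> L" using Lge by simp
  have "l * r1 \<le> 1" using lhi o1' rBpos by (simp add: le_divide_eq)
  then have "(l * r1)^2 \<le> 1^2" using llo rBpos o1' by (intro power_mono) auto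
  then have LR: "L * R1 \<le> 1" unfolding L_def R1_def R2_def by (simp add: power_mult_distrib)
  have "1 / 2 \<le> r1" using g o1' by linarith
  then have "(1/2)^2 \<le> r1^2" by (intro power_mono) auto
  then have RAg: "1/4 \<le> R1" unfolding R1_def R2_def by (simp add: power2_eq_square)
  have RBA: "R2 \<le> R1" unfolding R1_def R2_def using o1' rBpos by (intro power_mono) auto
  have RBpos: "0 \<le> R2" unfolding R1_def R2_def by simp
  have RAl: "R1 < 1" unfolding R1_def R2_def using o2' o1' rBpos by (simp add: abs_square_less_1)
  have "L * (1/4) \<le> L * R1" using RAg Lpos by (intro mult_left_mono) auto
  then have Lhi: "L \<le> 4" using LR by linarith
  define k where "k = (R1 + R2 - 1) / 2"
  define gg where "gg = 1 + k / R1"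
  have gg1: "gg \<le> 2" unfolding gg_def k_def using RAg RBA RAl by (simp add: divide_simps)
  have gg2: "- 2 \<le> gg" unfolding gg_def k_def using RAg RBpos by (simp add: divide_simps)
  note tb = tbound[OF t gg2 gg1]
  have Neq: "L + L + L * L + t * (- 1 * L * (1 + L * (R2 - k)) + 0 * L * (1 + L * (R1 - k)) + 0 * (L / R2) * (k + L * R2 * (k - R1)) + - 1 * (L / R1) * (k + L * R1 * (k - R2)))
          = L * (2 + L - t * gg)"
    using RAg unfolding k_def gg_def by (simp add: field_simps)
  have f1: "L \<le> 2 + L - t * gg" using tb by linarith
  have f2: "2 + L - t * gg \<le> 8" using tb Lhi by linarith
  have "1 * 1 \<le> L * (2 + L - t * gg)" using Lge f1 by (intro mult_mono) auto
  then have N1: "1 \<le> L * (2 + L - t * gg)" by simp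
  have "L * (2 + L - t * gg) \<le> 4 * 8" using Lhi f1 f2 Lpos by (intro mult_mono) auto
  then have N2: "L * (2 + L - t * gg) \<le> 32" by simp
  have "L * R2 \<le> L * R1" using RBA Lpos by (intro mult_left_mono) auto
  then have sp1: "1 + L * R1 + L * R2 \<le> 3 * (1 + R1 + R2)" using LR RBpos RAg by (simp add: algebra_simps)
  have "0 \<le> L * R1" "0 \<le> L * R2" using Lpos unfolding R1_def R2_def by simp_all
  then have sp2: "1 + R1 + R2 \<le> 3 * (1 + L * R1 + L * R2)" using RAl RBA by (simp add: algebra_simps)
  have eR1: "R1 = (cmod (fst p))^2" and eR2: "R2 = (cmod (snd p))^2" by (simp_all add: R1_def R2_def r1_def r2_def)
  have eL1: "L = (lam t (-1) 0 p)^2" by (simp_all add: L_def l_def)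
  show ?thesis
    apply (rule region_generic[OF pC nz1 nz2 Uo pU FG eR1 eR2 eL1 eL1, where nlo=1 and nhi=32 and \<alpha>=3 and \<beta>=3])
    using N1[unfolded gg_def k_def] N2[unfolded gg_def k_def] sp1 sp2 Neq[unfolded k_def gg_def]
    by simp_all
qed

lemma reg6:
  fixes t :: real and p :: "complex \<times> complex"
  assumes t: "0 \<le> t" "t \<le> 1" and pC: "fst p + snd p + 1 = 0"
    and o1: "cmod (fst p) < cmod (snd p)" and o2: "cmod (snd p) < 1"
  shows "\<exists>D. (Ft t has_derivative D) (at p) \<and>
           (1 / 100) * fs_omega p (1, -1) (\<i>, -\<i>)
             \<le> fs_omega (Ft t p) (D (1, -1)) (D (\<i>, -\<i>)) \<and>
           fs_omega (Ft t p) (D (1, -1)) (D (\<i>, -\<i>))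
             \<le> 100 * fs_omega p (1, -1) (\<i>, -\<i>)"
proof -
  define r1 where "r1 = cmod (fst p)"
  define r2 where "r2 = cmod (snd p)"
  note g = geo[OF pC, folded r1_def r2_def]
  have o1': "r1 < r2" and o2': "r2 < 1" using o1 o2 by (simp_all add: r1_def r2_def)
  have rBpos: "0 < r1" using g o2' by linarith
  have nz1: "fst p \<noteq> 0" and nz2: "snd p \<noteq> 0" using o1' rBpos r1_def r2_def by auto
  define U where "U = {x::complex\<times>complex. cmod (fst x) < cmod (snd x) \<and> cmod (snd x) < 1}"
  have Uo: "open U" unfolding U_def by (intro open_U continuous_intros)
  have pU: "p \<in> U" unfolding U_def using o1 o2 by simp
  have FG: "G t 0 (-1) 0 (-1) x = Ft t x" if "x \<in> U" for x
  proof -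
    have a: "cmod (fst x) < cmod (snd x)" "cmod (snd x) < 1" using that unfolding U_def by auto
    then have "snd x \<noteq> 0" by auto
    have "max 1 (cmod (snd x)) = 1" "max (cmod (fst x)) (cmod (snd x)) = cmod (snd x)" "max 1 (cmod (fst x)) = 1" using a by auto
    moreover have "(1 / cmod (snd x)) powr t = exp (t * (0 * ln (cmod (fst x)) + - 1 * ln (cmod (snd x))))"
      using a \<open>snd x \<noteq> 0\<close> by (simp add: powr_def ln_div algebra_simps)
    ultimately show ?thesis using a \<open>snd x \<noteq> 0\<close> unfolding G_def Ft_def lam_def Let_def by simp
  qed
  define l where "l = lam t 0 (-1) p"
  have le: "l = exp (t * (- ln r2))" unfolding l_def lam_def r1_def r2_def by (simp add: algebra_simps)
  have cge: "0 \<le> - ln r2" using o2' rBpos o1' by simp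
  have "exp (- ln r2) = 1 / r2" using o1' rBpos by (simp add: exp_minus inverse_eq_divide)
  then have llo: "1 \<le> l" and lhi: "l \<le> 1 / r2" using exp_bnd2[OF cge t] le by auto
  define L where "L = l^2"
  define R1 where "R1 = r1^2"
  define R2 where "R2 = r2^2"
  have Lge: "1 \<le> L" unfolding L_def using llo by (simp add: one_le_power)
  have Lpos: "0 \<le> L" using Lge by simp
  have "l * r2 \<le> 1" using lhi o1' rBpos by (simp add: le_divide_eq)
  then have "(l * r2)^2 \<le> 1^2" using llo rBpos o1' by (intro power_mono) auto
  then have LR: "L * R2 \<le> 1" unfolding L_def R1_def R2_def by (simp add: power_mult_distrib)
  have "1 / 2 \<le> r2" using g o1' by linarith
  then have "(1/2)^2 \<le> r2^2" by (intro power_mono) auto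
  then have RAg: "1/4 \<le> R2" unfolding R1_def R2_def by (simp add: power2_eq_square)
  have RBA: "R1 \<le> R2" unfolding R1_def R2_def using o1' rBpos by (intro power_mono) auto
  have RBpos: "0 \<le> R1" unfolding R1_def R2_def by simp
  have RAl: "R2 < 1" unfolding R1_def R2_def using o2' o1' rBpos by (simp add: abs_square_less_1)
  have "L * (1/4) \<le> L * R2" using RAg Lpos by (intro mult_left_mono) auto
  then have Lhi: "L \<le> 4" using LR by linarith
  define k where "k = (R1 + R2 - 1) / 2"
  define gg where "gg = 1 + k / R2"
  have gg1: "gg \<le> 2" unfolding gg_def k_def using RAg RBA RAl by (simp add: divide_simps)
  have gg2: "- 2 \<le> gg" unfolding gg_def k_def using RAg RBpos by (simp add: divide_simps)
  note tb = tbound[OF t gg2 gg1]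
  have Neq: "L + L + L * L + t * (0 * L * (1 + L * (R2 - k)) + - 1 * L * (1 + L * (R1 - k)) + - 1 * (L / R2) * (k + L * R2 * (k - R1)) + 0 * (L / R1) * (k + L * R1 * (k - R2)))
          = L * (2 + L - t * gg)"
    using RAg unfolding k_def gg_def by (simp add: field_simps)
  have f1: "L \<le> 2 + L - t * gg" using tb by linarith
  have f2: "2 + L - t * gg \<le> 8" using tb Lhi by linarith
  have "1 * 1 \<le> L * (2 + L - t * gg)" using Lge f1 by (intro mult_mono) auto
  then have N1: "1 \<le> L * (2 + L - t * gg)" by simp
  have "L * (2 + L - t * gg) \<le> 4 * 8" using Lhi f1 f2 Lpos by (intro mult_mono) auto
  then have N2: "L * (2 + L - t * gg) \<le> 32" by simp
  have "L * R1 \<le> L * R2" using RBA Lpos by (intro mult_left_mono) auto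
  then have sp1: "1 + L * R1 + L * R2 \<le> 3 * (1 + R1 + R2)" using LR RBpos RAg by (simp add: algebra_simps)
  have "0 \<le> L * R1" "0 \<le> L * R2" using Lpos unfolding R1_def R2_def by simp_all
  then have sp2: "1 + R1 + R2 \<le> 3 * (1 + L * R1 + L * R2)" using RAl RBA by (simp add: algebra_simps)
  have eR1: "R1 = (cmod (fst p))^2" and eR2: "R2 = (cmod (snd p))^2" by (simp_all add: R1_def R2_def r1_def r2_def)
  have eL1: "L = (lam t 0 (-1) p)^2" by (simp_all add: L_def l_def)
  show ?thesis
    apply (rule region_generic[OF pC nz1 nz2 Uo pU FG eR1 eR2 eL1 eL1, where nlo=1 and nhi=32 and \<alpha>=3 and \<beta>=3])
    using N1[unfolded gg_def k_def] N2[unfolded gg_def k_def] sp1 sp2 Neq[unfolded k_def gg_def]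
    by simp_all
qed

theorem lemma4p1:
  shows "\<exists>c::real. c > 1 \<and>
    (\<forall>t\<in>{0..1::real}. \<forall>p\<in>C0 - Sing C0.
       \<exists>D. (Ft t has_derivative D) (at p) \<and>
           (1 / c) * fs_omega p (1, -1) (\<i>, -\<i>)
             \<le> fs_omega (Ft t p) (D (1, -1)) (D (\<i>, -\<i>)) \<and>
           fs_omega (Ft t p) (D (1, -1)) (D (\<i>, -\<i>))
             \<le> c * fs_omega p (1, -1) (\<i>, -\<i>))"
proof (intro exI[of _ 100] conjI ballI)
  show "(1::real) < 100" by simp
  fix t p assume tI: "t \<in> {0..1::real}" and pI: "p \<in> C0 - Sing C0"
  have t: "0 \<le> t" "t \<le> 1" using tI by auto
  have pC: "fst p + snd p + 1 = 0" using pI by (simp add: C0_def)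
  have ns: "(cmod (fst p) - 1) * (cmod (snd p) - 1) * (cmod (fst p) - cmod (snd p)) \<noteq> 0"
    using pI by (simp add: C0_def Sing_def)
  have n1: "cmod (fst p) \<noteq> 1" and n2: "cmod (snd p) \<noteq> 1" and n3: "cmod (fst p) \<noteq> cmod (snd p)"
    using ns by auto
  show "\<exists>D. (Ft t has_derivative D) (at p) \<and>
           (1 / 100) * fs_omega p (1, -1) (\<i>, -\<i>)
             \<le> fs_omega (Ft t p) (D (1, -1)) (D (\<i>, -\<i>)) \<and>
           fs_omega (Ft t p) (D (1, -1)) (D (\<i>, -\<i>))
             \<le> 100 * fs_omega p (1, -1) (\<i>, -\<i>)"
  proof (cases "cmod (snd p) < cmod (fst p)")
    case True
    show ?thesis
    proof (cases "1 < cmod (snd p)")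
      case True2: True
      show ?thesis by (rule reg1[OF t pC True True2])
    next
      case False
      then have lt: "cmod (snd p) < 1" using n2 by simp
      show ?thesis
      proof (cases "1 < cmod (fst p)")
        case True3: True
        show ?thesis by (rule reg3[OF t pC True3 lt])
      next
        case False
        then have "cmod (fst p) < 1" using n1 by simp
        then show ?thesis by (rule reg5[OF t pC True])
      qed
    qed
  next
    case False
    then have lt0: "cmod (fst p) < cmod (snd p)" using n3 by simp
    show ?thesis
    proof (cases "1 < cmod (fst p)")
      case True2: True
      show ?thesis by (rule reg2[OF t pC lt0 True2])
    next
      case False
      then have lt: "cmod (fst p) < 1" using n1 by simp
      show ?thesis
      proof (cases "1 < cmod (snd p)")
        case True3: True
        show ?thesis by (rule reg4[OF t pC True3 lt])
      next
        case False
        then have "cmod (snd p) < 1" using n2 by simp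
        then show ?thesis by (rule reg6[OF t pC lt0])
      qed
    qed
  qed
qed

end
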